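(* Fix $\Delta>0$. Suppose that to every $S\in V$ there is assigned a pair $(\mathrm{low}(S),\mathrm{sol}(S))\in\mathbb{R}\times\mathbb{R}^d$ (the output of the subroutine $\mathtt{SubtreeSolver}(S)$) such that $\|\mathrm{sol}(S)\|_0\le k$ for all $S\in V$ and (i) $\mathrm{low}(S)\le F(S)$ for every $S\in V$; (ii) there exists $S\in V^*$ with $P(\mathrm{sol}(S))\le \mathrm{low}(S)+\Delta$. Consider the following best-first search procedure. Initialize a min-priority queue containing only $\emptyset$ with key $\mathrm{low}(\emptyset)$; set $x_{\min}\leftarrow \mathrm{sol}(\emptyset)$ and $P_{\min}\leftarrow P(x_{\min})$. While the queue is nonempty: pop a node $S$ of smallest key (ties broken arbitrarily); if $P(\mathrm{sol}(S))\le \mathrm{low}(S)+\Delta$, return $\mathrm{sol}(S)$ and stop; otherwise, for each child $T$ of $S$ in $G$ (i.e., each $T$ with $(S,T)\in E$): if $\mathrm{low}(T)>P_{\min}$, the node $T$ may either be discarded (pruned) or processed as follows, and if $\mathrm{low}(T)\le P_{\min}$ it must be processed as follows: push $T$ with key $\mathrm{low}(T)$, and if $P(\mathrm{sol}(T))<P_{\min}$ set $x_{\min}\leftarrow\mathrm{sol}(T)$ and $P_{\min}\leftarrow P(x_{\min})$. Then this procedure always halts at the return step, and the returned vector $x$ satisfies $\|x\|_0\le k$ and $P(x)\le P(x^* )+\Delta$.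
   Context: Let $d,k$ be positive integers with $k\le d$, and let $[d]=\{1,\dots,d\}$ with its usual order. For nonempty $S\subseteq[d]$, $\max S$ is its largest element; set $\max\emptyset=0$. For $x\in\mathbb{R}^d$, $\mathrm{supp}(x)=\{i: x_i\neq 0\}$ and $\|x\|_0=|\mathrm{supp}(x)|$. The state-space tree $G=(V,E)$ is defined by $V=\{S\subseteq[d]: |S|\le k \text{ and } k-|S|\le d-\max S\}$, with a directed edge $(S,T)\in E$ for $S,T\in V$ iff $T\neq\emptyset$ and $S=T\setminus\{\max T\}$ (then $T$ is a child of $S$). For $S\in V$, $\mathrm{desc}(S)\subseteq V$ denotes the set consisting of $S$ and all its descendants in $G$, and $U(S)=\{x\in\mathbb{R}^d: \mathrm{supp}(x)\subseteq S' \text{ for some } S'\in\mathrm{desc}(S)\}$. Let $P:\mathbb{R}^d\to\mathbb{R}$ be a function and let $x^*$ be an optimal solution of $\min\{P(x): \|x\|_0\le k\}$ (assumed to exist). Define $F(S)=\inf\{P(x): x\in U(S)\}$ for $S\in V$, and $V^*=\{S\in V: x^*\in U(S)\}$. *)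

theory Defs
  imports Main "HOL-Library.Multiset" "HOL-Library.Extended_Real"
begin

text \<open>Vectors of R^d are represented as functions nat => real vanishing outside {1..d}.\<close>

definition Rd :: "nat \<Rightarrow> (nat \<Rightarrow> real) set" where
  "Rd d = {x. \<forall>i. i \<notin> {1..d} \<longrightarrow> x i = 0}"

definition supp :: "(nat \<Rightarrow> real) \<Rightarrow> nat set" where
  "supp x = {i. x i \<noteq> 0}"

definition norm0 :: "(nat \<Rightarrow> real) \<Rightarrow> nat" where
  "norm0 x = card (supp x)"

definition max0 :: "nat set \<Rightarrow> nat" where
  "max0 S = (if S = {} then 0 else Max S)"

definition Vset :: "nat \<Rightarrow> nat \<Rightarrow> nat set set" where
  "Vset d k = {S. S \<subseteq> {1..d} \<and> card S \<le> k \<and> k - card S \<le> d - max0 S}"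

definition Eset :: "nat \<Rightarrow> nat \<Rightarrow> (nat set \<times> nat set) set" where
  "Eset d k = {(S, T). S \<in> Vset d k \<and> T \<in> Vset d k \<and> T \<noteq> {} \<and> S = T - {Max T}}"

definition children :: "nat \<Rightarrow> nat \<Rightarrow> nat set \<Rightarrow> nat set set" where
  "children d k S = {T. (S, T) \<in> Eset d k}"

definition desc :: "nat \<Rightarrow> nat \<Rightarrow> nat set \<Rightarrow> nat set set" where
  "desc d k S = {T. (S, T) \<in> (Eset d k)\<^sup>*}"

definition Uset :: "nat \<Rightarrow> nat \<Rightarrow> nat set \<Rightarrow> (nat \<Rightarrow> real) set" where
  "Uset d k S = {x \<in> Rd d. \<exists>S' \<in> desc d k S. supp x \<subseteq> S'}"

text \<open>F(S) as an infimum in the extended reals (it may be -infinity).\<close>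
definition Fval :: "nat \<Rightarrow> nat \<Rightarrow> ((nat \<Rightarrow> real) \<Rightarrow> real) \<Rightarrow> nat set \<Rightarrow> ereal" where
  "Fval d k P S = (INF x \<in> Uset d k S. ereal (P x))"

definition Vstar :: "nat \<Rightarrow> nat \<Rightarrow> (nat \<Rightarrow> real) \<Rightarrow> nat set set" where
  "Vstar d k xs = {S \<in> Vset d k. xs \<in> Uset d k S}"

text \<open>Processing the children list (in arbitrary order) of a popped node:
  each child is either pruned (allowed only if low T > P_min) or pushed,
  updating the incumbent x_min (P_min = P x_min).\<close>
inductive proc_children ::
  "((nat \<Rightarrow> real) \<Rightarrow> real) \<Rightarrow> (nat set \<Rightarrow> real) \<Rightarrow> (nat set \<Rightarrow> (nat \<Rightarrow> real))
   \<Rightarrow> nat set list \<Rightarrow> nat set multiset \<Rightarrow> (nat \<Rightarrow> real) \<Rightarrow> nat set multiset \<Rightarrow> (nat \<Rightarrow> real) \<Rightarrow> bool"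
  for P low sol where
  pc_nil: "proc_children P low sol [] Q xm Q xm"
| pc_prune: "low T > P xm \<Longrightarrow> proc_children P low sol ts Q xm Q' xm'
             \<Longrightarrow> proc_children P low sol (T # ts) Q xm Q' xm'"
| pc_push: "proc_children P low sol ts (add_mset T Q) (if P (sol T) < P xm then sol T else xm) Q' xm'
             \<Longrightarrow> proc_children P low sol (T # ts) Q xm Q' xm'"

datatype bfs_state = Running "nat set multiset" "nat \<Rightarrow> real" | Returned "nat \<Rightarrow> real"

inductive bfs_step ::
  "nat \<Rightarrow> nat \<Rightarrow> ((nat \<Rightarrow> real) \<Rightarrow> real) \<Rightarrow> (nat set \<Rightarrow> real) \<Rightarrow> (nat set \<Rightarrow> (nat \<Rightarrow> real))
   \<Rightarrow> real \<Rightarrow> bfs_state \<Rightarrow> bfs_state \<Rightarrow> bool"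
  for d k P low sol \<Delta> where
  bfs_return: "S \<in># Q \<Longrightarrow> (\<forall>T \<in># Q. low S \<le> low T) \<Longrightarrow> P (sol S) \<le> low S + \<Delta>
     \<Longrightarrow> bfs_step d k P low sol \<Delta> (Running Q xm) (Returned (sol S))"
| bfs_expand: "S \<in># Q \<Longrightarrow> (\<forall>T \<in># Q. low S \<le> low T) \<Longrightarrow> \<not> (P (sol S) \<le> low S + \<Delta>)
     \<Longrightarrow> distinct ts \<Longrightarrow> set ts = children d k S
     \<Longrightarrow> proc_children P low sol ts (Q - {#S#}) xm Q' xm'
     \<Longrightarrow> bfs_step d k P low sol \<Delta> (Running Q xm) (Running Q' xm')"

end

theory Submission
  imports Defs
begin

lemma pc_shape:
  "proc_children P low sol ts Q xm Q' xm' \<Longrightarrow> \<exists>M. Q' = Q + M \<and> set_mset M \<subseteq> set ts"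
proof (induction rule: proc_children.induct)
  case (pc_nil Q xm) then show ?case by (intro exI[of _ "{#}"]) auto
next
  case (pc_prune T xm ts Q Q' xm') then show ?case by auto
next
  case (pc_push ts T Q xm Q' xm')
  then obtain M where "Q' = add_mset T Q + M" "set_mset M \<subseteq> set ts" by auto
  then show ?case by (intro exI[of _ "add_mset T M"]) auto
qed

lemma pc_inv:
  "proc_children P low sol ts Q xm Q' xm' \<Longrightarrow> (\<forall>T\<in>set ts. c \<le> P (sol T)) \<Longrightarrow> c \<le> P xm
   \<Longrightarrow> c \<le> P xm' \<and> (\<forall>W\<in>set ts. low W \<le> c \<longrightarrow> W \<in># Q')"
proof (induction rule: proc_children.induct)
  case (pc_nil Q xm) then show ?case by auto
next
  case (pc_prune T xm ts Q Q' xm')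
  then show ?case by auto
next
  case (pc_push ts T Q xm Q' xm')
  have "c \<le> P (if P (sol T) < P xm then sol T else xm)" using pc_push.prems by auto
  with pc_push.IH pc_push.prems have IH: "c \<le> P xm' \<and> (\<forall>W\<in>set ts. low W \<le> c \<longrightarrow> W \<in># Q')"
    by auto
  have "T \<in># Q'"
    using pc_shape[OF pc_push.hyps] by auto
  with IH show ?case by auto
qed

lemma pc_exists: "\<exists>Q' xm'. proc_children P low sol ts Q xm Q' xm'"
proof (induction ts arbitrary: Q xm)
  case Nil then show ?case by (auto intro: pc_nil)
next
  case (Cons T ts)
  then obtain Q' xm' where "proc_children P low sol ts (add_mset T Q) (if P (sol T) < P xm then sol T else xm) Q' xm'"
    by blast
  then show ?case by (auto intro: pc_push)
qed

lemma Vset_finite: "finite (Vset d k)"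
proof -
  have "Vset d k \<subseteq> Pow {1..d}" unfolding Vset_def by auto
  then show ?thesis by (rule finite_subset) auto
qed

lemma child_card:
  assumes "T \<in> children d k S" shows "card T = Suc (card S) \<and> card T \<le> k \<and> S \<in> Vset d k \<and> T \<in> Vset d k"
proof -
  have T: "T \<in> Vset d k" "S \<in> Vset d k" "T \<noteq> {}" "S = T - {Max T}"
    using assms unfolding children_def Eset_def by auto
  have fin: "finite T" using T(1) unfolding Vset_def by (auto intro: finite_subset)
  have "Max T \<in> T" using fin T(3) by simp
  then have "card T = Suc (card S)" using T(4) fin T(3)
    by (metis card_Suc_Diff1)
  then show ?thesis using T(1,2) unfolding Vset_def by auto
qed

lemma reach_root:
  assumes "k \<le> d"
  shows "S \<in> Vset d k \<Longrightarrow> ({}, S) \<in> (Eset d k)\<^sup>*"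
proof (induction "card S" arbitrary: S)
  case 0
  then have "finite S" unfolding Vset_def by (auto intro: finite_subset)
  with 0 show ?case by auto
next
  case (Suc n)
  have fin: "finite S" using Suc.prems unfolding Vset_def by (auto intro: finite_subset)
  have ne: "S \<noteq> {}" using Suc.hyps by auto
  define S' where "S' = S - {Max S}"
  have mx: "Max S \<in> S" using fin ne by simp
  have cS': "card S' = n" using Suc.hyps fin mx unfolding S'_def by simp
  have sub: "S \<subseteq> {1..d}" and ck: "card S \<le> k" and kk: "k - card S \<le> d - max0 S"
    using Suc.prems unfolding Vset_def by auto
  have md: "Max S \<le> d" "1 \<le> Max S" using mx sub by auto
  have m0: "max0 S = Max S" using ne unfolding max0_def by simp
  have "max0 S' + 1 \<le> Max S"
  proof (cases "S' = {}")
    case True then show ?thesis using md unfolding max0_def by simp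
  next
    case False
    have "finite S'" using fin unfolding S'_def by auto
    then have "Max S' \<in> S'" using False by simp
    then have "Max S' < Max S" unfolding S'_def using fin
      by (metis Diff_iff Max_ge insertI1 order_le_neq_trans)
    then show ?thesis using False unfolding max0_def by simp
  qed
  then have "k - card S' \<le> d - max0 S'" using kk ck cS' Suc.hyps md m0 by linarith
  then have S'V: "S' \<in> Vset d k" using sub ck cS' Suc.hyps unfolding Vset_def S'_def by auto
  have "(S', S) \<in> Eset d k" using S'V Suc.prems ne unfolding Eset_def S'_def by auto
  moreover have "({}, S') \<in> (Eset d k)\<^sup>*" using Suc.hyps(1)[OF cS'[symmetric] S'V] .
  ultimately show ?case by auto
qed

theorem theorem1:
  fixes d k :: nat and P :: "(nat \<Rightarrow> real) \<Rightarrow> real" and xs :: "nat \<Rightarrow> real"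
    and low :: "nat set \<Rightarrow> real" and sol :: "nat set \<Rightarrow> (nat \<Rightarrow> real)" and \<Delta> :: real
  assumes "1 \<le> k" and "k \<le> d"
    and "xs \<in> Rd d" and "norm0 xs \<le> k"
    and "\<forall>x \<in> Rd d. norm0 x \<le> k \<longrightarrow> P xs \<le> P x"
    and "\<Delta> > 0"
    and "\<forall>S \<in> Vset d k. sol S \<in> Rd d \<and> norm0 (sol S) \<le> k"
    and "\<forall>S \<in> Vset d k. ereal (low S) \<le> Fval d k P S"
    and "\<exists>S \<in> Vstar d k xs. P (sol S) \<le> low S + \<Delta>"
  shows "(\<not> (\<exists>f. f 0 = Running {#{}#} (sol {}) \<and> (\<forall>n. bfs_step d k P low sol \<Delta> (f n) (f (Suc n)))))
       \<and> (\<forall>s. (bfs_step d k P low sol \<Delta>)\<^sup>*\<^sup>* (Running {#{}#} (sol {})) s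
           \<longrightarrow> (\<nexists>s'. bfs_step d k P low sol \<Delta> s s') \<longrightarrow> (\<exists>x. s = Returned x))
       \<and> (\<forall>x. (bfs_step d k P low sol \<Delta>)\<^sup>*\<^sup>* (Running {#{}#} (sol {})) (Returned x)
           \<longrightarrow> norm0 x \<le> k \<and> P x \<le> P xs + \<Delta>)"
proof -
  let ?step = "bfs_step d k P low sol \<Delta>"
  obtain Sg where Sg: "Sg \<in> Vstar d k xs" "P (sol Sg) \<le> low Sg + \<Delta>" using assms(9) by auto
  have SgV: "Sg \<in> Vset d k" using Sg unfolding Vstar_def by auto
  have solP: "P xs \<le> P (sol S)" if "S \<in> Vset d k" for S using assms(5,7) that by auto
  have lowA: "low A \<le> P xs" if "A \<in> Vset d k" "Sg \<in> desc d k A" for A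
  proof -
    obtain S' where S': "S' \<in> desc d k Sg" "supp xs \<subseteq> S'"
      using Sg(1) unfolding Vstar_def Uset_def by auto
    have "S' \<in> desc d k A" using S'(1) that(2) unfolding desc_def by auto
    then have "xs \<in> Uset d k A" using S'(2) assms(3) unfolding Uset_def by auto
    then have "Fval d k P A \<le> ereal (P xs)" unfolding Fval_def by (rule INF_lower)
    then have "ereal (low A) \<le> ereal (P xs)" using assms(8) that(1) by (meson order_trans)
    then show ?thesis by simp
  qed
  define Inv where "Inv s = (case s of
      Running Q xm \<Rightarrow> set_mset Q \<subseteq> Vset d k \<and> P xs \<le> P xm \<and> (\<exists>A\<in>#Q. Sg \<in> desc d k A)
    | Returned x \<Rightarrow> norm0 x \<le> k \<and> P x \<le> P xs + \<Delta>)" for s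
  have emptyV: "{} \<in> Vset d k" using assms(2) unfolding Vset_def max0_def by auto
  have Inv0: "Inv (Running {#{}#} (sol {}))"
    unfolding Inv_def using emptyV solP reach_root[OF assms(2) SgV] unfolding desc_def by auto
  have Inv_step: "Inv s'" if "?step s s'" "Inv s" for s s'
    using that
  proof (induction rule: bfs_step.induct)
    case (bfs_return S Q xm)
    then obtain A where A: "A \<in># Q" "Sg \<in> desc d k A" and QV: "set_mset Q \<subseteq> Vset d k"
      unfolding Inv_def by auto
    have "low S \<le> low A" using bfs_return A by auto
    also have "\<dots> \<le> P xs" using lowA A QV by auto
    finally have "P (sol S) \<le> P xs + \<Delta>" using bfs_return by linarith
    moreover have "norm0 (sol S) \<le> k" using assms(7) QV bfs_return by auto
    ultimately show ?case unfolding Inv_def by auto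
  next
    case (bfs_expand S Q ts xm Q' xm')
    have QV: "set_mset Q \<subseteq> Vset d k" and Pxm: "P xs \<le> P xm"
      and exA: "\<exists>A\<in>#Q. Sg \<in> desc d k A" using bfs_expand.prems unfolding Inv_def by auto
    have tsV: "\<forall>T\<in>set ts. T \<in> Vset d k" using bfs_expand.hyps(5) child_card by auto
    obtain M where M: "Q' = (Q - {#S#}) + M" "set_mset M \<subseteq> set ts"
      using pc_shape[OF bfs_expand.hyps(6)] by auto
    have Q'V: "set_mset Q' \<subseteq> Vset d k" using M tsV QV
      by (auto dest: in_diffD)
    have pc: "P xs \<le> P xm' \<and> (\<forall>W\<in>set ts. low W \<le> P xs \<longrightarrow> W \<in># Q')"
      apply (rule pc_inv[OF bfs_expand.hyps(6)])
      using tsV solP Pxm by auto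
    have "\<exists>A\<in>#Q'. Sg \<in> desc d k A"
    proof -
      obtain A where A: "A \<in># Q" "Sg \<in> desc d k A" using exA by auto
      show ?thesis
      proof (cases "A = S")
        case False
        then have "A \<in># Q - {#S#}" using A(1) by (simp add: in_diff_count)
        then show ?thesis using A M by auto
      next
        case True
        have "Sg \<noteq> A" using True bfs_expand.hyps(3) Sg(2) by auto
        moreover have "(A, Sg) \<in> (Eset d k)\<^sup>*" using A unfolding desc_def by auto
        ultimately obtain T where T: "(A, T) \<in> Eset d k" "(T, Sg) \<in> (Eset d k)\<^sup>*"
          by (metis converse_rtranclE)
        have Tts: "T \<in> set ts" using T(1) True bfs_expand.hyps(5) unfolding children_def by auto
        have "low T \<le> P xs" using lowA[of T] T tsV Tts unfolding desc_def by auto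
        then have "T \<in># Q'" using pc Tts by auto
        then show ?thesis using T(2) unfolding desc_def by auto
      qed
    qed
    then show ?case using Q'V pc unfolding Inv_def by auto
  qed
  have reachInv: "Inv s" if "?step\<^sup>*\<^sup>* (Running {#{}#} (sol {})) s" for s
    using that by (induction rule: rtranclp_induct) (auto intro: Inv0 Inv_step)
  have noRet: "\<not> ?step (Returned x) s" for x s
    by (auto elim: bfs_step.cases)
  define m where "m s = (case s of Running Q xm \<Rightarrow> image_mset (\<lambda>S. k - card S) Q | Returned x \<Rightarrow> {#})" for s
  have mdec: "m s' < m s" if "?step s s'" "\<exists>Q xm. s' = Running Q xm" for s s'
    using that
  proof (induction rule: bfs_step.induct)
    case (bfs_return S Q xm) then show ?case by simp
  next
    case (bfs_expand S Q ts xm Q' xm')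
    obtain M where M: "Q' = (Q - {#S#}) + M" "set_mset M \<subseteq> set ts"
      using pc_shape[OF bfs_expand.hyps(6)] by auto
    let ?f = "\<lambda>S. k - card S"
    have e1: "m (Running Q' xm') = image_mset ?f (Q - {#S#}) + image_mset ?f M"
      unfolding m_def M by (simp only: bfs_state.case image_mset_union)
    have e2: "m (Running Q xm) = image_mset ?f (Q - {#S#}) + {#?f S#}"
    proof -
      have eq: "add_mset S (Q - {#S#}) = Q" using bfs_expand.hyps(1) by (rule insert_DiffM)
      have X: "image_mset ?f (add_mset S (Q - {#S#})) = image_mset ?f (Q - {#S#}) + {#?f S#}"
        by simp
      have "image_mset ?f Q = image_mset ?f (Q - {#S#}) + {#?f S#}"
        using X unfolding eq .
      then show ?thesis unfolding m_def by (simp only: bfs_state.case)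
    qed
    have mp: "multp (<) (image_mset ?f (Q - {#S#}) + image_mset ?f M) (image_mset ?f (Q - {#S#}) + {#?f S#})"
    proof (rule one_step_implies_multp)
      show "\<forall>j\<in>#image_mset ?f M. \<exists>i\<in>#{#?f S#}. j < i"
      proof
        fix j assume "j \<in># image_mset ?f M"
        then obtain T where T: "T \<in># M" "j = ?f T" by auto
        then have "T \<in> children d k S" using M bfs_expand.hyps(5) by auto
        then have "card T = Suc (card S)" "card T \<le> k" using child_card by blast+
        then show "\<exists>i\<in>#{#?f S#}. j < i" using T by auto
      qed
    qed simp
    show ?case unfolding less_multiset_def e1 e2 by (rule mp)
  qed
  have wfm: "wfp ((<) :: nat multiset \<Rightarrow> nat multiset \<Rightarrow> bool)"
    by (rule wfp_less_multiset) (simp add: wfp_def wf_less)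
  have part1: "\<not> (\<exists>f. f 0 = Running {#{}#} (sol {}) \<and> (\<forall>n. ?step (f n) (f (Suc n))))"
  proof
    assume "\<exists>f. f 0 = Running {#{}#} (sol {}) \<and> (\<forall>n. ?step (f n) (f (Suc n)))"
    then obtain f where f: "\<forall>n. ?step (f n) (f (Suc n))" by auto
    have run: "\<exists>Q xm. f n = Running Q xm" for n
    proof (cases "f n")
      case (Returned x) then show ?thesis using f noRet by metis
    qed auto
    have "m (f (Suc n)) < m (f n)" for n using mdec f run by auto
    then have ch: "\<forall>i. (m (f (Suc i)), m (f i)) \<in> {(x :: nat multiset, y). x < y}" by simp
    have "wf {(x :: nat multiset, y). x < y}" using wfm unfolding wfp_def by simp
    then have "\<forall>g. \<not> (\<forall>i. (g (Suc i), g i) \<in> {(x :: nat multiset, y). x < y})"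
      unfolding wf_iff_no_infinite_down_chain by blast
    then have "\<not> (\<forall>i. ((\<lambda>n. m (f n)) (Suc i), (\<lambda>n. m (f n)) i) \<in> {(x :: nat multiset, y). x < y})"
      by (rule spec)
    then show False using ch by simp
  qed
  have part2: "\<forall>s. ?step\<^sup>*\<^sup>* (Running {#{}#} (sol {})) s \<longrightarrow> (\<nexists>s'. ?step s s') \<longrightarrow> (\<exists>x. s = Returned x)"
  proof (intro allI impI)
    fix s assume r: "?step\<^sup>*\<^sup>* (Running {#{}#} (sol {})) s" and stuck: "\<nexists>s'. ?step s s'"
    show "\<exists>x. s = Returned x"
    proof (cases s)
      case (Running Q xm)
      have QV: "set_mset Q \<subseteq> Vset d k" and ne: "Q \<noteq> {#}"
        using reachInv[OF r] Running unfolding Inv_def by auto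
      have fin: "finite (low ` set_mset Q)" by simp
      have "low ` set_mset Q \<noteq> {}" using ne by simp
      then have "Min (low ` set_mset Q) \<in> low ` set_mset Q" using fin by simp
      then obtain S where S: "S \<in># Q" "low S = Min (low ` set_mset Q)" by auto
      have minS: "\<forall>T\<in>#Q. low S \<le> low T" using S fin by auto
      show ?thesis
      proof (cases "P (sol S) \<le> low S + \<Delta>")
        case True
        then have "?step s (Returned (sol S))" using Running S minS by (auto intro: bfs_return)
        then show ?thesis using stuck by blast
      next
        case False
        have "finite (children d k S)"
          by (rule finite_subset[OF _ Vset_finite[of d k]]) (auto simp: children_def Eset_def)
        then obtain ts where ts: "set ts = children d k S" "distinct ts"
          using finite_distinct_list by blast
        obtain Q' xm' where "proc_children P low sol ts (Q - {#S#}) xm Q' xm'"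
          using pc_exists by blast
        then have "?step s (Running Q' xm')" using Running S minS False ts
          by (auto intro: bfs_expand)
        then show ?thesis using stuck by blast
      qed
    qed auto
  qed
  have part3: "\<forall>x. ?step\<^sup>*\<^sup>* (Running {#{}#} (sol {})) (Returned x) \<longrightarrow> norm0 x \<le> k \<and> P x \<le> P xs + \<Delta>"
    using reachInv unfolding Inv_def by fastforce
  show ?thesis using part1 part2 part3 by blast
qed

end
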